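(* Let $f_A,f_R,F,d_a,d_e$ be as in the context and let $\chi\in[0,1)$. There exists no $R\in(0,\frac{d_e}{2}]$ such that the ring state $\delta_{(R,0)}$ is an equilibrium state of the mean-field equation $\partial_t\rho+\nabla\cdot[\rho\,(F(\cdot,T)\ast\rho)]=0$.
   Context: Let $f_R, f_A:[0,\infty)\to\mathbb{R}$ be smooth integrable functions with $f_R\ge 0$ and $f_A\le 0$, such that there is $d_a>0$ with $(f_A+f_R)(\rho)\le 0$ for $\rho>d_a$ and $(f_A+f_R)(\rho)>0$ for $0\le\rho<d_a$. For $\chi\in[0,1]$, $s=(0,1)$, $l=(1,0)$, let $T=\chi\, s\otimes s + l\otimes l$ and $F(d,T) = f_A(|d|)\,T d + f_R(|d|)\,d$ for $d\in\mathbb{R}^2$; assume $F$ is $C^1$ with bounded total derivatives. Assume there is $d_e>d_a$ such that $\chi f_A+f_R$ is strictly decreasing on $[0,d_e]$ for all $\chi\in[0,1]$. A Borel probability measure $\mu$ on $\mathbb{R}^2$ is an equilibrium state if $K(x):=\int_{\mathbb{R}^2}F(x-y,T)\,d\mu(y)$ satisfies $K\in L^1_{loc}(d\mu)$ and $K=0$ on $\mathrm{supp}(\mu)$ $\mu$-a.e. For $R>0$ the ring state $\delta_{(R,0)}$ is the uniform probability measure on the circle $\{(R\cos\phi,R\sin\phi)\}$. *)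

theory Defs
  imports "HOL-Analysis.Analysis" "HOL-Probability.Probability"
begin

definition smooth_on :: "real set \<Rightarrow> (real \<Rightarrow> real) \<Rightarrow> bool" where
  "smooth_on S f \<longleftrightarrow> (\<exists>D :: nat \<Rightarrow> real \<Rightarrow> real. D 0 = f \<and>
     (\<forall>n. \<forall>x\<in>S. (D n has_real_derivative D (Suc n) x) (at x within S)))"

definition tensor :: "real \<times> real \<Rightarrow> real \<times> real \<Rightarrow> real \<times> real \<Rightarrow> real \<times> real" where
  "tensor u v d = (v \<bullet> d) *\<^sub>R u"

definition svec :: "real \<times> real" where "svec = (0, 1)"
definition lvec :: "real \<times> real" where "lvec = (1, 0)"

definition Tmap :: "real \<Rightarrow> real \<times> real \<Rightarrow> real \<times> real" where
  "Tmap chi d = chi *\<^sub>R tensor svec svec d + tensor lvec lvec d"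

definition Fint :: "(real \<Rightarrow> real) \<Rightarrow> (real \<Rightarrow> real) \<Rightarrow> real \<Rightarrow> real \<times> real \<Rightarrow> real \<times> real" where
  "Fint fA fR chi d = fA (norm d) *\<^sub>R Tmap chi d + fR (norm d) *\<^sub>R d"

definition msupport :: "(real \<times> real) measure \<Rightarrow> (real \<times> real) set" where
  "msupport \<mu> = {x. \<forall>e>0. emeasure \<mu> (ball x e) > 0}"

definition equilibrium_state :: "(real \<times> real \<Rightarrow> real \<times> real) \<Rightarrow> (real \<times> real) measure \<Rightarrow> bool" where
  "equilibrium_state G \<mu> \<longleftrightarrow> prob_space \<mu> \<and> sets \<mu> = sets borel \<and>
     (let K = (\<lambda>x. \<integral>y. G (x - y) \<partial>\<mu>) in
        (\<forall>C. compact C \<longrightarrow> set_integrable \<mu> C K) \<and>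
        (AE x in \<mu>. x \<in> msupport \<mu> \<longrightarrow> K x = 0))"

definition ring_state :: "real \<Rightarrow> (real \<times> real) measure" where
  "ring_state R = distr (uniform_measure lborel {0..<2*pi}) borel (\<lambda>\<phi>. (R * cos \<phi>, R * sin \<phi>))"

end

theory Submission
  imports Defs
begin


lemma ring_integral:
  fixes h :: "real \<times> real \<Rightarrow> real \<times> real"
  assumes h: "continuous_on UNIV h"
  shows "(\<integral>y. h y \<partial>ring_state R) = (1/(2*pi)) *\<^sub>R integral {0..2*pi} (\<lambda>\<phi>. h (R * cos \<phi>, R * sin \<phi>))"
proof -
  let ?S = "{0..<2*pi}"
  let ?p = "\<lambda>\<phi>::real. (R * cos \<phi>, R * sin \<phi>)"
  have pc: "continuous_on UNIV ?p" by (intro continuous_intros)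
  have hpc: "continuous_on UNIV (\<lambda>x. h (?p x))"
    by (rule continuous_on_compose2[OF h pc]) auto
  have pm: "?p \<in> measurable (uniform_measure lborel ?S) borel"
    using borel_measurable_continuous_onI[OF pc]
    by (subst measurable_cong_sets[of _ lborel borel borel]) (auto simp: measurable_lborel1)
  have hm: "h \<in> borel_measurable borel" using h by (rule borel_measurable_continuous_onI)
  have U: "uniform_measure lborel ?S = density lborel (\<lambda>x. ennreal (indicator ?S x / (2*pi)))"
  proof -
    have e: "1 / ennreal (2*pi) = ennreal (1/(2*pi))" using divide_ennreal[of 1 "2*pi"] by simp
    show ?thesis
    unfolding uniform_measure_def
    by (rule arg_cong2[where f=density], simp, rule ext) (auto split: split_indicator simp: e)
  qed
  have si: "set_integrable lborel ?S (\<lambda>x. h (?p x))"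
    by (rule set_integrable_subset[OF borel_integrable_atLeastAtMost'[of 0 "2*pi"]])
       (auto intro: continuous_on_subset[OF hpc])
  have "(\<integral>y. h y \<partial>ring_state R) = (\<integral>x. h (?p x) \<partial>uniform_measure lborel ?S)"
    unfolding ring_state_def by (rule integral_distr[OF pm hm])
  also have "... = (\<integral>x. (indicator ?S x / (2*pi)) *\<^sub>R h (?p x) \<partial>lborel)"
  proof -
    have fm: "(\<lambda>x. h (?p x)) \<in> borel_measurable lborel"
      using borel_measurable_continuous_onI[OF hpc] by simp
    have gm: "(\<lambda>x. indicator ?S x / (2*pi)) \<in> borel_measurable lborel"
      by measurable
    show ?thesis unfolding U by (rule integral_density[OF fm gm]) simp
  qed
  also have "... = (\<integral>x. (1/(2*pi)) *\<^sub>R (indicator ?S x *\<^sub>R h (?p x)) \<partial>lborel)"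
    by (intro Bochner_Integration.integral_cong refl) (simp split: split_indicator)
  also have "... = (1/(2*pi)) *\<^sub>R (\<integral>x. indicator ?S x *\<^sub>R h (?p x) \<partial>lborel)"
    by (rule integral_scaleR_right)
  also have "(\<integral>x. indicator ?S x *\<^sub>R h (?p x) \<partial>lborel) = integral ?S (\<lambda>x. h (?p x))"
    using set_borel_integral_eq_integral(2)[OF si] unfolding set_lebesgue_integral_def by simp
  also have "integral ?S (\<lambda>x. h (?p x)) = integral {0..2*pi} (\<lambda>x. h (?p x))"
    by (rule integral_spike_set; rule negligible_subset[of "{2*pi}"]) auto
  finally show ?thesis .
qed



lemma periodic_shift:
  fixes h :: "real \<Rightarrow> 'a::euclidean_space"
  assumes hc: "continuous_on UNIV h" and per: "\<And>x. h (x + c) = h x" and t: "0 \<le> t" "t \<le> c"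
  shows "integral {0..c} (\<lambda>\<psi>. h (t + \<psi>)) = integral {0..c} h"
proof -
  have int: "\<And>a b. h integrable_on {a..b}"
    by (rule integrable_continuous_real) (rule continuous_on_subset[OF hc], simp)
  have "integral {0..c} (\<lambda>\<psi>. h (t + \<psi>)) = integral {t..t+c} h"
    using integral_shift_Icc_real[of 0 c h t] by (simp add: o_def add.commute)
  also have "\<dots> = integral {t..c} h + integral {c..c+t} h"
    using Henstock_Kurzweil_Integration.integral_combine[of t c "t+c" h] int t by (simp add: add.commute)
  also have "integral {c..c+t} h = integral {0..t} h"
    using integral_shift_Icc_real[of 0 t h c] per by (simp add: o_def add.commute)
  also have "integral {t..c} h + integral {0..t} h = integral {0..c} h"
    using Henstock_Kurzweil_Integration.integral_combine[of 0 t c h] int t by (metis add.commute)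
  finally show ?thesis .
qed

lemma odd_reflect_zero:
  fixes q :: "real \<Rightarrow> real"
  assumes qc: "continuous_on UNIV q" and odd: "\<And>x. q (c - x) = - q x"
  shows "integral {0..c} q = 0"
proof -
  have int: "q integrable_on {0..c}"
    by (rule integrable_continuous_real) (rule continuous_on_subset[OF qc], simp)
  have "integral {0..c} (\<lambda>x. q (c - x)) = integral {0..c} ((\<lambda>y. q (-y)) \<circ> (+) (-c))"
    by (simp add: o_def)
  also have "\<dots> = integral {-c..0} (\<lambda>y. q (-y))"
    using integral_shift_Icc_real[of 0 c "\<lambda>y. q (-y)" "-c"] by simp
  also have "\<dots> = integral {0..c} q"
    using Henstock_Kurzweil_Integration.integral_reflect_real[of c 0 q] by (simp del: integral_reflect_real)
  finally have "integral {0..c} q = integral {0..c} (\<lambda>x. - q x)" by (simp add: odd)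
  also have "\<dots> = - integral {0..c} q" by (rule integral_neg)
  finally show ?thesis by simp
qed

lemma Fint_eq:
  "Fint fA fR chi d = ((fA (norm d) + fR (norm d)) * fst d, (chi * fA (norm d) + fR (norm d)) * snd d)"
  by (cases d) (simp add: Fint_def Tmap_def tensor_def svec_def lvec_def algebra_simps)

lemma norm_ring_diff:
  assumes "R > 0"
  shows "norm ((R * cos t, R * sin t) - (R * cos (t + s), R * sin (t + s))) = R * sqrt (2 - 2 * cos s)"
proof -
  have "(R * cos t - R * cos (t + s))\<^sup>2 + (R * sin t - R * sin (t + s))\<^sup>2
        = R\<^sup>2 * (2 - 2 * cos s)"
  proof -
    have "(R * cos t - R * cos (t + s))\<^sup>2 + (R * sin t - R * sin (t + s))\<^sup>2
      = R\<^sup>2 * ((cos t)\<^sup>2 + (sin t)\<^sup>2 + ((cos (t+s))\<^sup>2 + (sin (t+s))\<^sup>2)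
          - 2 * (cos t * cos (t+s) + sin t * sin (t+s)))"
      by algebra
    also have "cos t * cos (t+s) + sin t * sin (t+s) = cos s"
      using cos_diff[of "t+s" t] by (simp add: mult.commute)
    also have "(cos t)\<^sup>2 + (sin t)\<^sup>2 = 1" by (rule sin_cos_squared_add2)
    also have "(cos (t+s))\<^sup>2 + (sin (t+s))\<^sup>2 = 1" by (rule sin_cos_squared_add2)
    finally show ?thesis by simp
  qed
  then show ?thesis using assms
    by (simp add: norm_Pair real_sqrt_mult)
qed



lemma comp_integrals:
  fixes G :: "real \<Rightarrow> real"
  assumes Gc: "continuous_on UNIV G" and Gs: "\<And>x. G (2*pi - x) = G x"
  shows "integral {0..2*pi} (\<lambda>\<psi>. G \<psi> * (R * cos t - R * cos (t + \<psi>)))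
           = R * cos t * integral {0..2*pi} (\<lambda>\<psi>. G \<psi> * (1 - cos \<psi>))"
    and "integral {0..2*pi} (\<lambda>\<psi>. G \<psi> * (R * sin t - R * sin (t + \<psi>)))
           = R * sin t * integral {0..2*pi} (\<lambda>\<psi>. G \<psi> * (1 - cos \<psi>))"
proof -
  have c1: "continuous_on UNIV (\<lambda>\<psi>. G \<psi> * (1 - cos \<psi>))" by (intro continuous_intros Gc)
  have c2: "continuous_on UNIV (\<lambda>\<psi>. G \<psi> * sin \<psi>)" by (intro continuous_intros Gc)
  have i1: "(\<lambda>\<psi>. G \<psi> * (1 - cos \<psi>)) integrable_on {0..2*pi}"
    by (rule integrable_continuous_real) (rule continuous_on_subset[OF c1], simp)
  have i2: "(\<lambda>\<psi>. G \<psi> * sin \<psi>) integrable_on {0..2*pi}"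
    by (rule integrable_continuous_real) (rule continuous_on_subset[OF c2], simp)
  have z: "integral {0..2*pi} (\<lambda>\<psi>. G \<psi> * sin \<psi>) = 0"
    by (rule odd_reflect_zero[OF c2]) (simp add: Gs)
  have e1: "\<And>\<psi>. G \<psi> * (R * cos t - R * cos (t + \<psi>))
      = R * cos t * (G \<psi> * (1 - cos \<psi>)) + R * sin t * (G \<psi> * sin \<psi>)"
    by (simp add: cos_add algebra_simps)
  have e2: "\<And>\<psi>. G \<psi> * (R * sin t - R * sin (t + \<psi>))
      = R * sin t * (G \<psi> * (1 - cos \<psi>)) - R * cos t * (G \<psi> * sin \<psi>)"
    by (simp add: sin_add algebra_simps)
  show "integral {0..2*pi} (\<lambda>\<psi>. G \<psi> * (R * cos t - R * cos (t + \<psi>)))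
           = R * cos t * integral {0..2*pi} (\<lambda>\<psi>. G \<psi> * (1 - cos \<psi>))"
    unfolding e1
    by (subst integral_add) (auto intro: integrable_on_mult_right i1 i2 simp: z)
  show "integral {0..2*pi} (\<lambda>\<psi>. G \<psi> * (R * sin t - R * sin (t + \<psi>)))
           = R * sin t * integral {0..2*pi} (\<lambda>\<psi>. G \<psi> * (1 - cos \<psi>))"
    unfolding e2
    by (subst integral_diff) (auto intro: integrable_on_mult_right i1 i2 simp: z)
qed

lemma ring_support:
  assumes t: "t \<in> {0..<2*pi}"
  shows "(R * cos t, R * sin t) \<in> msupport (ring_state R)"
  unfolding msupport_def
proof (intro CollectI allI impI)
  fix e :: real assume e: "e > 0"
  let ?S = "{0..<2*pi}"
  let ?p = "\<lambda>\<phi>::real. (R * cos \<phi>, R * sin \<phi>)"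
  let ?U = "uniform_measure lborel ?S"
  let ?B = "ball (?p t) e"
  have pc: "continuous_on UNIV ?p" by (intro continuous_intros)
  have pm: "?p \<in> measurable ?U borel"
    using borel_measurable_continuous_onI[OF pc]
    by (subst measurable_cong_sets[of _ lborel borel borel]) (auto simp: measurable_lborel1)
  have opn: "open (?p -` ?B)"
    by (intro continuous_open_vimage open_ball) (intro continuous_intros)
  then have Bs: "?p -` ?B \<in> sets lborel" by simp
  have "continuous (at t) ?p" by (intro continuous_intros)
  then obtain d where d: "d > 0" "\<And>x. dist x t < d \<Longrightarrow> dist (?p x) (?p t) < e"
    unfolding continuous_at_eps_delta using e by blast
  define d' where "d' = min d (2*pi - t)"
  have d': "d' > 0" using d t by (auto simp: d'_def)
  have sub: "{t..<t+d'} \<subseteq> ?S \<inter> ?p -` ?B"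
  proof
    fix x assume x: "x \<in> {t..<t+d'}"
    then have "dist x t < d" using d'_def by (auto simp: dist_real_def)
    then have "dist (?p x) (?p t) < e" by (rule d(2))
    then show "x \<in> ?S \<inter> ?p -` ?B" using x t d'_def by (auto simp: dist_commute)
  qed
  have "emeasure lborel {t..<t+d'} \<le> emeasure lborel (?S \<inter> ?p -` ?B)"
    by (rule emeasure_mono[OF sub]) (use Bs in auto)
  moreover have "emeasure lborel {t..<t+d'} > 0" using d' by simp
  ultimately have pos: "emeasure lborel (?S \<inter> ?p -` ?B) > 0" by order
  have "emeasure (ring_state R) ?B = emeasure ?U (?p -` ?B \<inter> space ?U)"
    unfolding ring_state_def by (rule emeasure_distr[OF pm]) simp
  also have "\<dots> = emeasure lborel (?S \<inter> ?p -` ?B) / emeasure lborel ?S"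
    using Bs by (simp add: Int_commute)
  finally show "emeasure (ring_state R) ?B > 0"
    using pos by (simp add: ennreal_zero_less_divide)
qed



lemma AE_ring:
  assumes "AE x in ring_state R. P x"
  shows "AE \<phi> in uniform_measure lborel {0..<2*pi}. P (R * cos \<phi>, R * sin \<phi>)"
proof -
  let ?p = "\<lambda>\<phi>::real. (R * cos \<phi>, R * sin \<phi>)"
  have pc: "continuous_on UNIV ?p" by (intro continuous_intros)
  have pm: "?p \<in> measurable (uniform_measure lborel {0..<2*pi}) borel"
    using borel_measurable_continuous_onI[OF pc]
    by (subst measurable_cong_sets[of _ lborel borel borel]) (auto simp: measurable_lborel1)
  show ?thesis using AE_distrD[OF pm] assms unfolding ring_state_def by blast
qed

lemma AE_sincos:
  "AE \<phi> in uniform_measure lborel {0..<2*pi}. \<phi> \<in> {0..<2*pi} \<and> sin \<phi> * cos \<phi> \<noteq> 0"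
proof (rule AE_uniform_measureI)
  show "{0..<2*pi} \<in> sets lborel" by simp
  let ?N = "range (\<lambda>i::int. of_int i * pi / 2)"
  have N: "?N \<in> null_sets lborel" by (rule countable_imp_null_set_lborel) simp
  have sub: "{x \<in> space lborel. \<not> sin x * cos x \<noteq> 0} \<subseteq> ?N"
    proof
      fix x :: real assume "x \<in> {x \<in> space lborel. \<not> sin x * cos x \<noteq> 0}"
      then have "sin (2 * x) = 0" by (simp add: sin_double)
      then obtain i :: int where "2 * x = of_int i * pi" using sin_zero_iff_int2 by blast
      then have "x = of_int i * pi / 2" by simp
      then show "x \<in> ?N" by blast
    qed
  have "AE x in lborel. sin (x::real) * cos x \<noteq> 0" using AE_I'[OF N sub] by simp
  then show "AE x in lborel. x \<in> {0..<2*pi} \<longrightarrow> x \<in> {0..<2*pi} \<and> sin x * cos x \<noteq> 0"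
    by eventually_elim auto
qed

lemma smooth_cont: "smooth_on {0..} f \<Longrightarrow> continuous_on {0..} f"
  unfolding smooth_on_def
proof (elim exE conjE)
  fix D :: "nat \<Rightarrow> real \<Rightarrow> real"
  assume D0: "D 0 = f" and Dn: "\<forall>n. \<forall>x\<in>{0..}. (D n has_real_derivative D (Suc n) x) (at x within {0..})"
  have "continuous_on {0..} (D 0)"
    by (rule DERIV_continuous_on) (use Dn in blast)
  then show "continuous_on {0..} f" using D0 by simp
qed

lemma rho_cont:
  assumes g: "continuous_on {0..} g" and R: "R > 0"
  shows "continuous_on UNIV (\<lambda>\<psi>. g (R * sqrt (2 - 2 * cos \<psi>)))"
proof (rule continuous_on_compose2[OF g])
  show "continuous_on UNIV (\<lambda>\<psi>::real. R * sqrt (2 - 2 * cos \<psi>))" by (intro continuous_intros)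
  show "(\<lambda>\<psi>::real. R * sqrt (2 - 2 * cos \<psi>)) ` UNIV \<subseteq> {0..}"
    using R cos_le_one by auto
qed

theorem proposition3p6:
  fixes fA fR :: "real \<Rightarrow> real" and d_a d_e chi :: real
  assumes smooth_R: "smooth_on {0..} fR" and smooth_A: "smooth_on {0..} fA"
    and int_R: "set_integrable lborel {0..} fR" and int_A: "set_integrable lborel {0..} fA"
    and fR_nonneg: "\<forall>\<rho>\<ge>0. fR \<rho> \<ge> 0" and fA_nonpos: "\<forall>\<rho>\<ge>0. fA \<rho> \<le> 0"
    and d_a_pos: "d_a > 0"
    and sign_far: "\<forall>\<rho>>d_a. fA \<rho> + fR \<rho> \<le> 0"
    and sign_near: "\<forall>\<rho>. 0 \<le> \<rho> \<and> \<rho> < d_a \<longrightarrow> fA \<rho> + fR \<rho> > 0"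
    and chi: "chi \<in> {0..<1}"
    and F_C1: "\<exists>F' :: real \<times> real \<Rightarrow> ((real \<times> real) \<Rightarrow>\<^sub>L (real \<times> real)).
                 (\<forall>x. (Fint fA fR chi has_derivative blinfun_apply (F' x)) (at x)) \<and>
                 continuous_on UNIV F' \<and> bounded (range F')"
    and d_e: "d_e > d_a"
    and decr: "\<forall>chi'\<in>{0..1}. strict_antimono_on {0..d_e} (\<lambda>\<rho>. chi' * fA \<rho> + fR \<rho>)"
  shows "\<not> (\<exists>R\<in>{0<..d_e/2}. equilibrium_state (Fint fA fR chi) (ring_state R))"
proof
  assume "\<exists>R\<in>{0<..d_e/2}. equilibrium_state (Fint fA fR chi) (ring_state R)"
  then obtain R where R: "0 < R" "R \<le> d_e/2"
    and eq: "equilibrium_state (Fint fA fR chi) (ring_state R)" by auto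
  define F where "F = Fint fA fR chi"
  define K where "K = (\<lambda>x. \<integral>y. F (x - y) \<partial>ring_state R)"
  let ?S = "{0..<2*pi}"
  let ?p = "\<lambda>\<phi>::real. (R * cos \<phi>, R * sin \<phi>)"
  let ?U = "uniform_measure lborel ?S"
  define \<rho> where "\<rho> = (\<lambda>\<psi>::real. R * sqrt (2 - 2 * cos \<psi>))"
  define G1 where "G1 = (\<lambda>\<psi>. fA (\<rho> \<psi>) + fR (\<rho> \<psi>))"
  define G2 where "G2 = (\<lambda>\<psi>. chi * fA (\<rho> \<psi>) + fR (\<rho> \<psi>))"
  define A1 where "A1 = integral {0..2*pi} (\<lambda>\<psi>. G1 \<psi> * (1 - cos \<psi>))"
  define A2 where "A2 = integral {0..2*pi} (\<lambda>\<psi>. G2 \<psi> * (1 - cos \<psi>))"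
  have AEK: "AE x in ring_state R. x \<in> msupport (ring_state R) \<longrightarrow> K x = 0"
    using eq unfolding equilibrium_state_def K_def F_def Let_def by blast
  have AE1: "AE \<phi> in ?U. ?p \<phi> \<in> msupport (ring_state R) \<longrightarrow> K (?p \<phi>) = 0"
    by (rule AE_ring[OF AEK])
  have ps: "prob_space ?U" by (rule prob_space_uniform_measure) simp_all
  define P where "P = (\<lambda>\<phi>. \<phi> \<in> ?S \<and> sin \<phi> * cos \<phi> \<noteq> 0 \<and> (?p \<phi> \<in> msupport (ring_state R) \<longrightarrow> K (?p \<phi>) = 0))"
  have aeP: "AE \<phi> in ?U. P \<phi>"
    using AE1 AE_sincos unfolding P_def by eventually_elim blast
  have "\<exists>t. P t"
  proof (rule ccontr)
    assume nP: "\<not> (\<exists>t. P t)"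
    have "AE \<phi> in ?U. False" using aeP by eventually_elim (use nP in blast)
    then show False using prob_space.AE_False[OF ps] by simp
  qed
  then obtain t where "P t" by blast
  then have t: "t \<in> ?S" "sin t * cos t \<noteq> 0"
    and tK: "?p t \<in> msupport (ring_state R) \<longrightarrow> K (?p t) = 0" unfolding P_def by blast+
  have Kt: "K (?p t) = 0" using tK ring_support[OF t(1)] by blast
  have sc: "sin t \<noteq> 0" "cos t \<noteq> 0" using t(2) by auto
  have Fc: "continuous_on UNIV F"
  proof -
    from F_C1 obtain F' where "\<forall>x. (F has_derivative blinfun_apply (F' x)) (at x)"
      unfolding F_def by blast
    then show ?thesis
      by (intro continuous_at_imp_continuous_on ballI) (blast intro: has_derivative_continuous)
  qed
  have fAc: "continuous_on {0..} fA" by (rule smooth_cont[OF smooth_A])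
  have fRc: "continuous_on {0..} fR" by (rule smooth_cont[OF smooth_R])
  have G1c: "continuous_on UNIV G1" unfolding G1_def \<rho>_def
    by (intro continuous_intros rho_cont fAc fRc R(1))
  have G2c: "continuous_on UNIV G2" unfolding G2_def \<rho>_def
    by (intro continuous_intros rho_cont fAc fRc R(1))
  have G1s: "\<And>x. G1 (2*pi - x) = G1 x" unfolding G1_def \<rho>_def by simp
  have G2s: "\<And>x. G2 (2*pi - x) = G2 x" unfolding G2_def \<rho>_def by simp
  let ?h = "\<lambda>\<phi>. F (?p t - ?p \<phi>)"
  have hc: "continuous_on UNIV ?h"
    by (rule continuous_on_compose2[OF Fc]) (auto intro!: continuous_intros)
  have "K (?p t) = (1/(2*pi)) *\<^sub>R integral {0..2*pi} ?h"
    unfolding K_def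
    by (rule ring_integral) (rule continuous_on_compose2[OF Fc], auto intro!: continuous_intros)
  also have "integral {0..2*pi} ?h = integral {0..2*pi} (\<lambda>\<psi>. ?h (t + \<psi>))"
    by (rule periodic_shift[OF hc, symmetric]) (use t(1) in auto)
  finally have "(1/(2*pi)) *\<^sub>R integral {0..2*pi} (\<lambda>\<psi>. ?h (t + \<psi>)) = 0" using Kt by simp
  then have V0: "integral {0..2*pi} (\<lambda>\<psi>. ?h (t + \<psi>)) = 0" by simp
  have hi: "(\<lambda>\<psi>. ?h (t + \<psi>)) integrable_on {0..2*pi}"
    by (rule integrable_continuous_real)
       (rule continuous_on_compose2[OF hc], auto intro!: continuous_intros)
  have hform: "\<And>\<psi>. ?h (t + \<psi>) = (G1 \<psi> * (R * cos t - R * cos (t + \<psi>)), G2 \<psi> * (R * sin t - R * sin (t + \<psi>)))"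
    unfolding F_def Fint_eq norm_ring_diff[OF R(1)] G1_def G2_def \<rho>_def by simp
  have "fst (integral {0..2*pi} (\<lambda>\<psi>. ?h (t + \<psi>))) = integral {0..2*pi} (fst \<circ> (\<lambda>\<psi>. ?h (t + \<psi>)))"
    by (rule integral_linear[OF hi bounded_linear_fst, symmetric])
  also have "\<dots> = integral {0..2*pi} (\<lambda>\<psi>. G1 \<psi> * (R * cos t - R * cos (t + \<psi>)))"
    unfolding o_def hform by simp
  also have "\<dots> = R * cos t * A1" unfolding A1_def by (rule comp_integrals(1)[OF G1c G1s])
  finally have "R * cos t * A1 = 0" using V0 by simp
  then have A1z: "A1 = 0" using R(1) sc by simp
  have "snd (integral {0..2*pi} (\<lambda>\<psi>. ?h (t + \<psi>))) = integral {0..2*pi} (snd \<circ> (\<lambda>\<psi>. ?h (t + \<psi>)))"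
    by (rule integral_linear[OF hi bounded_linear_snd, symmetric])
  also have "\<dots> = integral {0..2*pi} (\<lambda>\<psi>. G2 \<psi> * (R * sin t - R * sin (t + \<psi>)))"
    unfolding o_def hform by simp
  also have "\<dots> = R * sin t * A2" unfolding A2_def by (rule comp_integrals(2)[OF G2c G2s])
  finally have "R * sin t * A2 = 0" using V0 by simp
  then have A2z: "A2 = 0" using R(1) sc by simp
  define f where "f = (\<lambda>\<psi>. fR (\<rho> \<psi>) * (1 - cos \<psi>))"
  have fc: "continuous_on UNIV f" unfolding f_def \<rho>_def
    by (intro continuous_intros rho_cont fRc R(1))
  have g1i: "(\<lambda>\<psi>. G1 \<psi> * (1 - cos \<psi>)) integrable_on {0..2*pi}"
    by (rule integrable_continuous_real) (intro continuous_intros continuous_on_subset[OF G1c], simp)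
  have g2i: "(\<lambda>\<psi>. G2 \<psi> * (1 - cos \<psi>)) integrable_on {0..2*pi}"
    by (rule integrable_continuous_real) (intro continuous_intros continuous_on_subset[OF G2c], simp)
  have fe: "\<And>\<psi>. (1 - chi) * f \<psi> = G2 \<psi> * (1 - cos \<psi>) - chi * (G1 \<psi> * (1 - cos \<psi>))"
    unfolding f_def G1_def G2_def by (simp add: algebra_simps)
  have "(1 - chi) * integral {0..2*pi} f = integral {0..2*pi} (\<lambda>\<psi>. (1 - chi) * f \<psi>)" by simp
  also have "\<dots> = A2 - chi * A1"
    unfolding fe A1_def A2_def by (subst integral_diff) (auto intro: g2i integrable_on_mult_right g1i)
  finally have "(1 - chi) * integral {0..2*pi} f = 0" using A1z A2z by simp
  then have fz: "integral {0..2*pi} f = 0" using chi by simp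
  have fi: "f integrable_on {0..2*pi}"
    by (rule integrable_continuous_real) (rule continuous_on_subset[OF fc], simp)
  have "f (pi/2) = 0"
  proof (rule has_integral_0_closure_imp_0[of "{0<..<2*pi}" f])
    show "continuous_on (closure {0<..<2*pi}) f" by (rule continuous_on_subset[OF fc]) simp
    show "\<And>x. x \<in> {0<..<2*pi} \<Longrightarrow> 0 \<le> f x"
      unfolding f_def \<rho>_def using fR_nonneg R(1) cos_le_one by (auto intro!: mult_nonneg_nonneg)
    show "0 < emeasure lborel {0<..<2*pi}" by simp
    show "emeasure lborel {0<..<2*pi} < \<infinity>" by simp
    show "emeasure lborel (closure {0<..<2*pi}) = emeasure lborel {0<..<2*pi}" by simp
    show "open {0<..<2*pi::real}" by simp
    show "(f has_integral 0) (closure {0<..<2*pi})" using fi fz by (simp add: has_integral_integral)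
    show "pi/2 \<in> closure {0<..<2*pi}" by simp
  qed
  then have f0: "fR (R * sqrt 2) = 0" unfolding f_def \<rho>_def by simp
  have "sqrt 2 < sqrt ((2::real)^2)" by (rule real_sqrt_less_mono) simp
  then have "sqrt 2 < (2::real)" by simp
  then have "R * sqrt 2 < R * 2" using R(1) by (rule mult_strict_left_mono)
  then have lt: "R * sqrt 2 < d_e" using R(2) by linarith
  have "strict_antimono_on {0..d_e} fR" using bspec[OF decr, of 0] by simp
  then have "fR (R * sqrt 2) > fR d_e"
    using monotone_onD[of "{0..d_e}" "(<)" "\<lambda>x y. y < x" fR "R * sqrt 2" d_e]
      lt R(1) d_e d_a_pos by simp
  moreover have "fR d_e \<ge> 0" using fR_nonneg d_e d_a_pos by simp
  ultimately show False using f0 by simp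
qed


end
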